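(* Let $N\ge1$, $K\ge1$, $n_v\ge0$, and assume the row-stochastic matrix $\mathbf{T}\in[0,1]^{K\times K}$ is irreducible and aperiodic. Let $X(\cdot)$ be the probabilistic cellular automaton on $[K]^N$ with local transition matrix $\mathbf{T}$ and global transition matrix $\mathbf{P}$. Then $X(\cdot)$ is irreducible, aperiodic, and hence ergodic. In particular, there exists a unique stationary distribution $\pi$ on $[K]^N$, all states are positive recurrent, $\lim_{t\to\infty}\mathbb{P}(X(t)=\cdot)=\pi(\cdot)$, and there exist $C\in(0,\infty)$, $\rho\in(0,1)$ and $t_0\in\mathbb{N}$ such that $\|\mathbf{P}^t(x,\cdot)-\pi\|_{TV}\le C\rho^t$ for all $t\ge t_0$ and all $x\in[K]^N$, where $\|\cdot\|_{TV}:=\|\cdot\|_1$.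
   Context: Vertices $[N]=\{1,\dots,N\}$ are arranged on a cycle; for $n\in[N]$, $V_n\subset[N]$ is the set of residues modulo $N$ of $n-n_v,\dots,n+n_v$, and $|V_n|$ its cardinality. The probabilistic cellular automaton is the Markov chain $X(t)=(X_1(t),\dots,X_N(t))$ on $[K]^N$ with transition matrix $\mathbf{P}(x,y)=\prod_{n=1}^N \frac{1}{|V_n|}\sum_{i\in V_n}\mathbf{T}_{x_i,y_n}$. Here $\|\mu\|_1=\sum_{y}|\mu(y)|$. *)

theory Defs
  imports Complex_Main "HOL-Library.FuncSet"
begin

text \<open>Matrices over a finite index set I are functions 'a => 'a => real.
  mpow A I t is the t-th matrix power of A restricted to I.\<close>
fun mpow :: "('a \<Rightarrow> 'a \<Rightarrow> real) \<Rightarrow> 'a set \<Rightarrow> nat \<Rightarrow> 'a \<Rightarrow> 'a \<Rightarrow> real" where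
  "mpow A I 0 i j = (if i = j then 1 else 0)"
| "mpow A I (Suc t) i j = (\<Sum>k\<in>I. mpow A I t i k * A k j)"

definition row_stochastic :: "('a \<Rightarrow> 'a \<Rightarrow> real) \<Rightarrow> 'a set \<Rightarrow> bool" where
  "row_stochastic A I \<longleftrightarrow> (\<forall>i\<in>I. \<forall>j\<in>I. 0 \<le> A i j \<and> A i j \<le> 1) \<and> (\<forall>i\<in>I. (\<Sum>j\<in>I. A i j) = 1)"

definition irreducible_mat :: "('a \<Rightarrow> 'a \<Rightarrow> real) \<Rightarrow> 'a set \<Rightarrow> bool" where
  "irreducible_mat A I \<longleftrightarrow> (\<forall>i\<in>I. \<forall>j\<in>I. \<exists>t. mpow A I t i j > 0)"

definition period :: "('a \<Rightarrow> 'a \<Rightarrow> real) \<Rightarrow> 'a set \<Rightarrow> 'a \<Rightarrow> nat" where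
  "period A I i = Gcd {t. t > 0 \<and> mpow A I t i i > 0}"

definition aperiodic_mat :: "('a \<Rightarrow> 'a \<Rightarrow> real) \<Rightarrow> 'a set \<Rightarrow> bool" where
  "aperiodic_mat A I \<longleftrightarrow> (\<forall>i\<in>I. period A I i = 1)"

text \<open>Taboo probabilities: probability, starting at i, to be at j at time t
  without having visited i at times 1..t.\<close>
fun taboo :: "('a \<Rightarrow> 'a \<Rightarrow> real) \<Rightarrow> 'a set \<Rightarrow> 'a \<Rightarrow> nat \<Rightarrow> 'a \<Rightarrow> real" where
  "taboo A I i 0 j = (if j = i then 1 else 0)"
| "taboo A I i (Suc t) j = (if j = i then 0 else (\<Sum>k\<in>I. taboo A I i t k * A k j))"

definition first_return :: "('a \<Rightarrow> 'a \<Rightarrow> real) \<Rightarrow> 'a set \<Rightarrow> 'a \<Rightarrow> nat \<Rightarrow> real" where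
  "first_return A I i t = (if t = 0 then 0 else (\<Sum>k\<in>I. taboo A I i (t - 1) k * A k i))"

text \<open>Positive recurrence: return is certain and the expected return time is finite.\<close>
definition positive_recurrent :: "('a \<Rightarrow> 'a \<Rightarrow> real) \<Rightarrow> 'a set \<Rightarrow> 'a \<Rightarrow> bool" where
  "positive_recurrent A I i \<longleftrightarrow>
     first_return A I i sums 1 \<and> summable (\<lambda>t. real t * first_return A I i t)"

definition prob_dist :: "('a \<Rightarrow> real) \<Rightarrow> 'a set \<Rightarrow> bool" where
  "prob_dist \<mu> I \<longleftrightarrow> (\<forall>x\<in>I. 0 \<le> \<mu> x) \<and> (\<Sum>x\<in>I. \<mu> x) = 1"

definition stationary :: "('a \<Rightarrow> 'a \<Rightarrow> real) \<Rightarrow> 'a set \<Rightarrow> ('a \<Rightarrow> real) \<Rightarrow> bool" where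
  "stationary A I \<pi> \<longleftrightarrow> prob_dist \<pi> I \<and> (\<forall>y\<in>I. (\<Sum>x\<in>I. \<pi> x * A x y) = \<pi> y)"

text \<open>Neighbourhood V_n: residues mod N of n-nv,...,n+nv, represented in {1..N}.\<close>
definition nbhd :: "nat \<Rightarrow> nat \<Rightarrow> nat \<Rightarrow> nat set" where
  "nbhd N nv n = {nat ((int n + j - 1) mod int N + 1) | j. - int nv \<le> j \<and> j \<le> int nv}"

text \<open>State space [K]^N: configurations x : {1..N} -> {1..K} (extensional).\<close>
definition states :: "nat \<Rightarrow> nat \<Rightarrow> (nat \<Rightarrow> nat) set" where
  "states N K = ({1..N} \<rightarrow>\<^sub>E {1..K})"

definition pca_P :: "nat \<Rightarrow> nat \<Rightarrow> (nat \<Rightarrow> nat \<Rightarrow> real) \<Rightarrow> (nat \<Rightarrow> nat) \<Rightarrow> (nat \<Rightarrow> nat) \<Rightarrow> real" where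
  "pca_P N nv T x y = (\<Prod>n\<in>{1..N}. (1 / real (card (nbhd N nv n))) * (\<Sum>i\<in>nbhd N nv n. T (x i) (y n)))"

end

theory Submission
  imports Defs
begin

lemma mpow_add:
  assumes "y \<in> I" "finite I"
  shows "mpow A I (s + t) x y = (\<Sum>k\<in>I. mpow A I s x k * mpow A I t k y)"
  using assms
proof (induction t arbitrary: y)
  case 0
  have "(\<Sum>k\<in>I. mpow A I s x k * mpow A I 0 k y) = (\<Sum>k\<in>I. if k = y then mpow A I s x k else 0)"
    by (rule sum.cong) auto
  also have "\<dots> = mpow A I s x y" using 0 by (simp add: sum.delta')
  finally show ?case by simp
next
  case (Suc t)
  have "mpow A I (s + Suc t) x y = (\<Sum>k\<in>I. mpow A I (s+t) x k * A k y)" by simp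
  also have "\<dots> = (\<Sum>k\<in>I. (\<Sum>l\<in>I. mpow A I s x l * mpow A I t l k) * A k y)"
    using Suc.IH Suc.prems by (intro sum.cong) auto
  also have "\<dots> = (\<Sum>k\<in>I. \<Sum>l\<in>I. mpow A I s x l * (mpow A I t l k * A k y))"
    by (simp add: sum_distrib_right mult.assoc)
  also have "\<dots> = (\<Sum>l\<in>I. \<Sum>k\<in>I. mpow A I s x l * (mpow A I t l k * A k y))"
    by (rule sum.swap)
  also have "\<dots> = (\<Sum>l\<in>I. mpow A I s x l * (\<Sum>k\<in>I. mpow A I t l k * A k y))"
    by (simp add: sum_distrib_left)
  also have "\<dots> = (\<Sum>l\<in>I. mpow A I s x l * mpow A I (Suc t) l y)" by simp
  finally show ?case .
qed

lemma semigroup_add_closed: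
  assumes cl: "\<And>a b. a \<in> S \<Longrightarrow> b \<in> S \<Longrightarrow> a + b \<in> S" and a: "a \<in> S" and b: "(b::nat) \<in> S"
  shows "a + k * b \<in> S"
proof (induction k)
  case 0 then show ?case using a by simp
next
  case (Suc k)
  have "a + Suc k * b = (a + k * b) + b" by simp
  then show ?case using Suc cl b by metis
qed

lemma semigroup_mult_closed:
  assumes cl: "\<And>a b. a \<in> S \<Longrightarrow> b \<in> S \<Longrightarrow> a + b \<in> S" and b: "(b::nat) \<in> S" and "k \<ge> 1"
  shows "k * b \<in> S"
proof -
  obtain j where "k = Suc j" using assms(3) by (cases k) auto
  then show ?thesis using semigroup_add_closed[OF cl b b, of j] by (simp add: add.commute)
qed

lemma numerical_semigroup:
  assumes cl: "\<And>a b. a \<in> S \<Longrightarrow> b \<in> S \<Longrightarrow> a + b \<in> S"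
    and pos: "\<And>a. a \<in> S \<Longrightarrow> a > 0"
    and g: "Gcd S = (1::nat)"
  shows "\<exists>n0. \<forall>n\<ge>n0. n \<in> S"
proof -
  have "S \<noteq> {}" using g by auto
  then obtain a0 where a0: "a0 \<in> S" by auto
  have ex: "\<exists>d. d > 0 \<and> (\<exists>b\<in>S. b + d \<in> S)"
    using a0 cl[OF a0 a0] pos[OF a0] by (intro exI[of _ a0]) auto
  define d where "d = (LEAST d. d > 0 \<and> (\<exists>b\<in>S. b + d \<in> S))"
  have d: "d > 0 \<and> (\<exists>b\<in>S. b + d \<in> S)" unfolding d_def by (rule LeastI_ex[OF ex])
  have dmin: "\<And>e. e > 0 \<Longrightarrow> (\<exists>b\<in>S. b + e \<in> S) \<Longrightarrow> d \<le> e"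
    unfolding d_def by (rule Least_le) auto
  obtain b where b: "b \<in> S" "b + d \<in> S" using d by auto
  have dvd: "d dvd a" if aS: "a \<in> S" for a
  proof -
    define q where "q = a div d"
    define r where "r = a mod d"
    have ar: "a = q * d + r" unfolding q_def r_def by simp
    have rd: "r < d" unfolding r_def using d by simp
    have x1: "(q+1) * (b + d) \<in> S" using semigroup_mult_closed[OF cl b(2), of "q+1"] by simp
    have x2: "(a + q * b) + (b + d) \<in> S" using semigroup_add_closed[OF cl aS b(1), of q] cl b(2) by blast
    have eq: "(a + q * b) + (b + d) = (q+1) * (b + d) + r" using ar by (simp add: algebra_simps)
    have "r = 0"
    proof (rule ccontr)
      assume "r \<noteq> 0"
      then have "d \<le> r" using dmin[of r] x1 x2 eq by auto
      then show False using rd by simp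
    qed
    then show ?thesis unfolding r_def by auto
  qed
  have "d dvd Gcd S" by (rule Gcd_greatest) (use dvd in auto)
  then have d1: "d = 1" using g by simp
  then have b1: "b + 1 \<in> S" using b by simp
  have "\<forall>n \<ge> b * b. n \<in> S"
  proof (intro allI impI)
    fix n assume n: "n \<ge> b * b"
    have bpos: "b > 0" using pos[OF b(1)] .
    define q where "q = n div b"
    define r where "r = n mod b"
    have nr: "n = q * b + r" unfolding q_def r_def by simp
    have rb: "r < b" unfolding r_def using bpos by simp
    have qb: "q \<ge> b"
    proof (rule ccontr)
      assume "\<not> q \<ge> b" then have "q + 1 \<le> b" by simp
      then have "(q+1) * b \<le> b * b" by (rule mult_le_mono1)
      then show False using n nr rb by (simp add: algebra_simps)
    qed
    have eq: "n = (q - r) * b + r * (b + 1)" using nr qb rb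
      by (simp add: algebra_simps diff_mult_distrib)
    have qr1: "1 \<le> q - r" using qb rb by linarith
    have m1: "(q - r) * b \<in> S" by (rule semigroup_mult_closed[OF cl b(1) qr1])
    show "n \<in> S"
    proof (cases "r = 0")
      case True then show ?thesis using m1 eq by simp
    next
      case False
      have r1: "1 \<le> r" using False by linarith
      have "r * (b+1) \<in> S" by (rule semigroup_mult_closed[OF cl b1 r1])
      then show ?thesis using m1 eq cl by metis
    qed
  qed
  then show ?thesis by blast
qed

lemma finite_uniform_bound:
  assumes "finite I" "\<forall>x\<in>I. \<exists>n0::nat. \<forall>n\<ge>n0. P x n"
  shows "\<exists>n0. \<forall>x\<in>I. \<forall>n\<ge>n0. P x n"
  using assms
proof (induction I rule: finite_induct)
  case empty then show ?case by auto
next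
  case (insert a F)
  then obtain n1 where n1: "\<forall>x\<in>F. \<forall>n\<ge>n1. P x n" by auto
  obtain n2 where n2: "\<forall>n\<ge>n2. P a n" using insert by auto
  show ?case by (rule exI[of _ "max n1 n2"]) (use n1 n2 in auto)
qed



locale stoch =
  fixes A :: "'a \<Rightarrow> 'a \<Rightarrow> real" and S :: "'a set"
  assumes fin: "finite S" and ne: "S \<noteq> {}"
    and nonneg: "\<And>x y. x \<in> S \<Longrightarrow> y \<in> S \<Longrightarrow> 0 \<le> A x y"
    and rowsum: "\<And>x. x \<in> S \<Longrightarrow> (\<Sum>y\<in>S. A x y) = 1"
begin

definition vm :: "('a \<Rightarrow> real) \<Rightarrow> nat \<Rightarrow> 'a \<Rightarrow> real" where
  "vm \<nu> t y = (\<Sum>z\<in>S. \<nu> z * mpow A S t z y)"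

lemma mpow_nonneg: "x \<in> S \<Longrightarrow> y \<in> S \<Longrightarrow> 0 \<le> mpow A S t x y"
  by (induction t arbitrary: y) (auto intro!: sum_nonneg mult_nonneg_nonneg nonneg)

lemma mpow_rowsum: "x \<in> S \<Longrightarrow> (\<Sum>y\<in>S. mpow A S t x y) = 1"
proof (induction t)
  case 0 then show ?case using fin by (simp add: sum.delta)
next
  case (Suc t)
  have "(\<Sum>y\<in>S. mpow A S (Suc t) x y) = (\<Sum>y\<in>S. \<Sum>k\<in>S. mpow A S t x k * A k y)" by simp
  also have "\<dots> = (\<Sum>k\<in>S. \<Sum>y\<in>S. mpow A S t x k * A k y)" by (rule sum.swap)
  also have "\<dots> = (\<Sum>k\<in>S. mpow A S t x k * (\<Sum>y\<in>S. A k y))"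
    by (simp add: sum_distrib_left)
  also have "\<dots> = (\<Sum>k\<in>S. mpow A S t x k)" using rowsum by simp
  finally show ?case using Suc by simp
qed

lemma vm_0: "y \<in> S \<Longrightarrow> vm \<nu> 0 y = \<nu> y"
proof -
  assume y: "y \<in> S"
  have "vm \<nu> 0 y = (\<Sum>z\<in>S. if z = y then \<nu> z else 0)"
    unfolding vm_def by (intro sum.cong) auto
  also have "\<dots> = \<nu> y" using fin y by (simp add: sum.delta')
  finally show ?thesis .
qed

lemma vm_Suc: "vm \<nu> (Suc t) y = (\<Sum>k\<in>S. vm \<nu> t k * A k y)"
proof -
  have "vm \<nu> (Suc t) y = (\<Sum>z\<in>S. \<Sum>k\<in>S. \<nu> z * (mpow A S t z k * A k y))"
    unfolding vm_def by (simp add: sum_distrib_left)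
  also have "\<dots> = (\<Sum>k\<in>S. \<Sum>z\<in>S. \<nu> z * (mpow A S t z k * A k y))" by (rule sum.swap)
  also have "\<dots> = (\<Sum>k\<in>S. vm \<nu> t k * A k y)"
    unfolding vm_def by (simp add: sum_distrib_right mult.assoc)
  finally show ?thesis .
qed

lemma vm_cong: "(\<And>z. z \<in> S \<Longrightarrow> \<nu> z = \<mu> z) \<Longrightarrow> vm \<nu> t y = vm \<mu> t y"
  unfolding vm_def by (intro sum.cong) auto

lemma vm_add: "y \<in> S \<Longrightarrow> vm \<nu> (s + t) y = vm (vm \<nu> s) t y"
proof (induction t arbitrary: y)
  case 0 then show ?case by (simp add: vm_0)
next
  case (Suc t)
  have "vm \<nu> (s + Suc t) y = (\<Sum>k\<in>S. vm \<nu> (s+t) k * A k y)" using vm_Suc[of \<nu> "s+t"] by simp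
  also have "\<dots> = (\<Sum>k\<in>S. vm (vm \<nu> s) t k * A k y)" using Suc by (intro sum.cong) auto
  also have "\<dots> = vm (vm \<nu> s) (Suc t) y" by (simp add: vm_Suc)
  finally show ?case .
qed

lemma vm_delta: "x \<in> S \<Longrightarrow> vm (\<lambda>z. if z = x then 1 else 0) t y = mpow A S t x y"
proof -
  assume x: "x \<in> S"
  have "vm (\<lambda>z. if z = x then 1 else 0) t y = (\<Sum>z\<in>S. if z = x then mpow A S t z y else 0)"
    unfolding vm_def by (intro sum.cong) auto
  also have "\<dots> = mpow A S t x y" using fin x by (simp add: sum.delta')
  finally show ?thesis .
qed

lemma vm_diff: "vm (\<lambda>z. \<nu> z - \<mu> z) t y = vm \<nu> t y - vm \<mu> t y"
  unfolding vm_def by (simp add: left_diff_distrib sum_subtractf)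

lemma vm_sum: "(\<Sum>y\<in>S. vm \<nu> t y) = (\<Sum>z\<in>S. \<nu> z)"
proof -
  have "(\<Sum>y\<in>S. vm \<nu> t y) = (\<Sum>z\<in>S. \<nu> z * (\<Sum>y\<in>S. mpow A S t z y))"
    unfolding vm_def sum_distrib_left by (rule sum.swap)
  also have "\<dots> = (\<Sum>z\<in>S. \<nu> z)" using mpow_rowsum by simp
  finally show ?thesis .
qed

lemma vm_nonneg: "(\<And>z. z \<in> S \<Longrightarrow> 0 \<le> \<nu> z) \<Longrightarrow> y \<in> S \<Longrightarrow> 0 \<le> vm \<nu> t y"
  unfolding vm_def by (auto intro!: sum_nonneg mult_nonneg_nonneg mpow_nonneg)

lemma vm_l1: "(\<Sum>y\<in>S. \<bar>vm \<nu> t y\<bar>) \<le> (\<Sum>z\<in>S. \<bar>\<nu> z\<bar>)"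
proof -
  have "(\<Sum>y\<in>S. \<bar>vm \<nu> t y\<bar>) \<le> (\<Sum>y\<in>S. \<Sum>z\<in>S. \<bar>\<nu> z\<bar> * mpow A S t z y)"
    unfolding vm_def
  proof (rule sum_mono)
    fix y assume y: "y \<in> S"
    have "\<bar>\<Sum>z\<in>S. \<nu> z * mpow A S t z y\<bar> \<le> (\<Sum>z\<in>S. \<bar>\<nu> z * mpow A S t z y\<bar>)" by (rule sum_abs)
    also have "\<dots> = (\<Sum>z\<in>S. \<bar>\<nu> z\<bar> * mpow A S t z y)"
      using y mpow_nonneg by (intro sum.cong) (auto simp: abs_mult)
    finally show "\<bar>\<Sum>z\<in>S. \<nu> z * mpow A S t z y\<bar> \<le> (\<Sum>z\<in>S. \<bar>\<nu> z\<bar> * mpow A S t z y)" .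
  qed
  also have "\<dots> = (\<Sum>z\<in>S. \<bar>\<nu> z\<bar> * (\<Sum>y\<in>S. mpow A S t z y))"
    unfolding sum_distrib_left by (rule sum.swap)
  also have "\<dots> = (\<Sum>z\<in>S. \<bar>\<nu> z\<bar>)" using mpow_rowsum by simp
  finally show ?thesis .
qed

end



lemma geom_bound:
  fixes r :: real
  assumes "0 \<le> r" "r < 1" "m > 0"
  shows "\<exists>C \<rho>. 0 < C \<and> 0 < \<rho> \<and> \<rho> < 1 \<and> (\<forall>t. r ^ (t div m) \<le> C * \<rho> ^ t)"
proof -
  define r' where "r' = max r (1/2)"
  have r': "0 < r'" "r' < 1" "r \<le> r'" using assms unfolding r'_def by auto
  define \<rho> where "\<rho> = r' powr (1 / real m)"
  have \<rho>: "0 < \<rho>" "\<rho> < 1" unfolding \<rho>_def using r' assms powr_less_mono2[of "1 / real m" r' 1] by auto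
  have "r ^ (t div m) \<le> (1 / r') * \<rho> ^ t" for t
  proof -
    have "r ^ (t div m) \<le> r' ^ (t div m)" using assms r' by (intro power_mono) auto
    also have "\<dots> = r' powr real (t div m)" using r' by (simp add: powr_realpow)
    also have "\<dots> \<le> r' powr (real t / real m - 1)"
    proof (rule powr_mono')
      have e1: "real t = real (t div m) * real m + real (t mod m)"
        by (metis of_nat_add of_nat_mult div_mult_mod_eq)
      have e2: "real (t mod m) < real m" using assms by simp
      have "real t < (real (t div m) + 1) * real m" using e1 e2 by (simp add: algebra_simps)
      then have "real t / real m < real (t div m) + 1" using assms by (simp add: divide_simps)
      then show "real t / real m - 1 \<le> real (t div m)" by simp
    qed (use r' in auto)
    also have "\<dots> = r' powr (real t / real m) / r'" using r' by (simp add: powr_diff)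
    also have "r' powr (real t / real m) = \<rho> ^ t"
    proof -
      have "\<rho> ^ t = \<rho> powr real t" using \<rho> by (simp add: powr_realpow)
      also have "\<dots> = r' powr (1 / real m * real t)" unfolding \<rho>_def by (simp add: powr_powr)
      finally show ?thesis by simp
    qed
    finally show ?thesis by simp
  qed
  then show ?thesis using r' \<rho> by (intro exI[of _ "1/r'"] exI[of _ \<rho>]) auto
qed



locale doeblin = stoch +
  fixes m :: nat and \<delta> :: real
  assumes m_pos: "m > 0" and d_pos: "\<delta> > 0"
    and minor: "\<And>x y. x \<in> S \<Longrightarrow> y \<in> S \<Longrightarrow> \<delta> \<le> mpow A S m x y"
begin

definition r :: real where "r = 1 - real (card S) * \<delta>"

lemma r_bounds: "0 \<le> r" "r < 1"
proof -
  obtain x where x: "x \<in> S" using ne by auto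
  have "(\<Sum>y\<in>S. \<delta>) \<le> (\<Sum>y\<in>S. mpow A S m x y)" using minor[OF x] by (intro sum_mono) auto
  then have "real (card S) * \<delta> \<le> 1" using mpow_rowsum[OF x] by simp
  then show "0 \<le> r" unfolding r_def by simp
  have "card S > 0" using fin ne by (simp add: card_gt_0_iff)
  then show "r < 1" unfolding r_def using d_pos by simp
qed

lemma contract:
  fixes \<nu> :: "'a \<Rightarrow> real"
  assumes s0: "(\<Sum>z\<in>S. \<nu> z) = 0"
  shows "(\<Sum>y\<in>S. \<bar>vm \<nu> m y\<bar>) \<le> r * (\<Sum>z\<in>S. \<bar>\<nu> z\<bar>)"
proof -
  have "(\<Sum>y\<in>S. \<bar>vm \<nu> m y\<bar>) \<le> (\<Sum>y\<in>S. \<Sum>z\<in>S. \<bar>\<nu> z\<bar> * (mpow A S m z y - \<delta>))"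
  proof (rule sum_mono)
    fix y assume y: "y \<in> S"
    have "vm \<nu> m y = (\<Sum>z\<in>S. \<nu> z * mpow A S m z y) - (\<Sum>z\<in>S. \<nu> z) * \<delta>"
      unfolding vm_def using s0 by simp
    also have "\<dots> = (\<Sum>z\<in>S. \<nu> z * (mpow A S m z y - \<delta>))"
      by (simp add: sum_distrib_right right_diff_distrib sum_subtractf)
    finally have "\<bar>vm \<nu> m y\<bar> \<le> (\<Sum>z\<in>S. \<bar>\<nu> z * (mpow A S m z y - \<delta>)\<bar>)"
      by (simp add: sum_abs)
    also have "\<dots> = (\<Sum>z\<in>S. \<bar>\<nu> z\<bar> * (mpow A S m z y - \<delta>))"
      using y minor by (intro sum.cong) (auto simp: abs_mult)
    finally show "\<bar>vm \<nu> m y\<bar> \<le> (\<Sum>z\<in>S. \<bar>\<nu> z\<bar> * (mpow A S m z y - \<delta>))" .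
  qed
  also have "\<dots> = (\<Sum>z\<in>S. \<Sum>y\<in>S. \<bar>\<nu> z\<bar> * (mpow A S m z y - \<delta>))" by (rule sum.swap)
  also have "\<dots> = (\<Sum>z\<in>S. \<bar>\<nu> z\<bar> * ((\<Sum>y\<in>S. mpow A S m z y) - real (card S) * \<delta>))"
    by (simp add: sum_distrib_left sum_subtractf right_diff_distrib mult_ac)
  also have "\<dots> = (\<Sum>z\<in>S. \<bar>\<nu> z\<bar> * r)"
    using mpow_rowsum unfolding r_def by (intro sum.cong) auto
  also have "\<dots> = r * (\<Sum>z\<in>S. \<bar>\<nu> z\<bar>)" by (subst sum_distrib_right[symmetric]) (rule mult.commute)
  finally show ?thesis .
qed

lemma decay_q:
  fixes \<nu> :: "'a \<Rightarrow> real"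
  assumes s0: "(\<Sum>z\<in>S. \<nu> z) = 0"
  shows "(\<Sum>y\<in>S. \<bar>vm \<nu> (q * m + s) y\<bar>) \<le> r ^ q * (\<Sum>z\<in>S. \<bar>\<nu> z\<bar>)"
proof (induction q)
  case 0 then show ?case using vm_l1 by simp
next
  case (Suc q)
  have "(\<Sum>y\<in>S. \<bar>vm \<nu> (Suc q * m + s) y\<bar>) = (\<Sum>y\<in>S. \<bar>vm (vm \<nu> (q * m + s)) m y\<bar>)"
    using vm_add[of _ \<nu> "q * m + s" m] by (intro sum.cong) (auto simp: algebra_simps)
  also have "\<dots> \<le> r * (\<Sum>y\<in>S. \<bar>vm \<nu> (q * m + s) y\<bar>)"
    by (rule contract) (simp add: vm_sum s0)
  also have "\<dots> \<le> r * (r ^ q * (\<Sum>z\<in>S. \<bar>\<nu> z\<bar>))"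
    using Suc r_bounds by (intro mult_left_mono) auto
  finally show ?case by simp
qed

lemma decay:
  fixes \<nu> :: "'a \<Rightarrow> real"
  assumes s0: "(\<Sum>z\<in>S. \<nu> z) = 0"
  shows "(\<Sum>y\<in>S. \<bar>vm \<nu> t y\<bar>) \<le> r ^ (t div m) * (\<Sum>z\<in>S. \<bar>\<nu> z\<bar>)"
  using decay_q[OF s0, of "t div m" "t mod m"] by simp

lemma geo:
  obtains C \<rho> where "0 < C" "0 < \<rho>" "\<rho> < 1"
    "\<And>(\<nu>::'a\<Rightarrow>real) t. (\<Sum>z\<in>S. \<nu> z) = 0 \<Longrightarrow> (\<Sum>y\<in>S. \<bar>vm \<nu> t y\<bar>) \<le> C * \<rho> ^ t * (\<Sum>z\<in>S. \<bar>\<nu> z\<bar>)"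
proof -
  obtain C \<rho> where C: "0 < C" "0 < \<rho>" "\<rho> < 1" "\<And>t. r ^ (t div m) \<le> C * \<rho> ^ t"
    using geom_bound[OF r_bounds m_pos] by auto
  show ?thesis
  proof (rule that[OF C(1-3)])
    fix \<nu> :: "'a \<Rightarrow> real" and t assume s0: "(\<Sum>z\<in>S. \<nu> z) = 0"
    have "(\<Sum>y\<in>S. \<bar>vm \<nu> t y\<bar>) \<le> r ^ (t div m) * (\<Sum>z\<in>S. \<bar>\<nu> z\<bar>)" by (rule decay[OF s0])
    also have "\<dots> \<le> C * \<rho> ^ t * (\<Sum>z\<in>S. \<bar>\<nu> z\<bar>)"
      using C(4) by (intro mult_right_mono) (auto intro: sum_nonneg)
    finally show "(\<Sum>y\<in>S. \<bar>vm \<nu> t y\<bar>) \<le> C * \<rho> ^ t * (\<Sum>z\<in>S. \<bar>\<nu> z\<bar>)" .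
  qed
qed

end



context doeblin begin

definition x0 :: 'a where "x0 = (SOME x. x \<in> S)"
definition pi :: "'a \<Rightarrow> real" where "pi y = lim (\<lambda>t. mpow A S t x0 y)"

lemma x0: "x0 \<in> S" unfolding x0_def using ne by (auto intro: someI_ex)

definition d0 :: "'a \<Rightarrow> real" where "d0 = (\<lambda>z. if z = x0 then 1 else 0)"

lemma cauchy_step:
  assumes C: "0 < C" "0 < \<rho>" "\<rho> < 1"
    "\<And>(\<nu>::'a\<Rightarrow>real) t. (\<Sum>z\<in>S. \<nu> z) = 0 \<Longrightarrow> (\<Sum>y\<in>S. \<bar>vm \<nu> t y\<bar>) \<le> C * \<rho> ^ t * (\<Sum>z\<in>S. \<bar>\<nu> z\<bar>)"
    and y: "y \<in> S"
  shows "\<bar>mpow A S (s + t) x0 y - mpow A S t x0 y\<bar> \<le> 2 * C * \<rho> ^ t"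
proof -
  define \<nu> where "\<nu> = (\<lambda>z. vm d0 s z - d0 z)"
  have dd: "\<And>t. mpow A S t x0 y = vm d0 t y" using vm_delta[OF x0] unfolding d0_def by simp
  have "mpow A S (s + t) x0 y - mpow A S t x0 y = vm (vm d0 s) t y - vm d0 t y"
    unfolding dd vm_add[OF y] ..
  also have "\<dots> = vm \<nu> t y" unfolding \<nu>_def by (simp add: vm_diff)
  finally have eq: "mpow A S (s + t) x0 y - mpow A S t x0 y = vm \<nu> t y" .
  have sd0: "(\<Sum>z\<in>S. d0 z) = 1" unfolding d0_def using fin x0 by simp
  have s0: "(\<Sum>z\<in>S. \<nu> z) = 0" unfolding \<nu>_def by (simp add: sum_subtractf vm_sum sd0)
  have nn: "\<And>z. z \<in> S \<Longrightarrow> 0 \<le> d0 z" unfolding d0_def by simp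
  have "(\<Sum>z\<in>S. \<bar>\<nu> z\<bar>) \<le> (\<Sum>z\<in>S. vm d0 s z + d0 z)"
    unfolding \<nu>_def
  proof (intro sum_mono)
    fix z assume z: "z \<in> S"
    have vn: "0 \<le> vm d0 s z" by (rule vm_nonneg[OF nn z])
    show "\<bar>vm d0 s z - d0 z\<bar> \<le> vm d0 s z + d0 z"
      using abs_triangle_ineq4[of "vm d0 s z" "d0 z"] vn nn[OF z] by simp
  qed
  also have "\<dots> = 2" by (simp add: sum.distrib vm_sum sd0)
  finally have l1: "(\<Sum>z\<in>S. \<bar>\<nu> z\<bar>) \<le> 2" .
  have "\<bar>vm \<nu> t y\<bar> \<le> (\<Sum>y\<in>S. \<bar>vm \<nu> t y\<bar>)" using y fin by (intro member_le_sum) auto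
  also have "\<dots> \<le> C * \<rho> ^ t * (\<Sum>z\<in>S. \<bar>\<nu> z\<bar>)" by (rule C(4)[OF s0])
  also have "\<dots> \<le> C * \<rho> ^ t * 2" using l1 C by (intro mult_left_mono) auto
  finally show ?thesis using eq by simp
qed

lemma pi_lim: assumes y: "y \<in> S" shows "(\<lambda>t. mpow A S t x0 y) \<longlonglongrightarrow> pi y"
proof -
  obtain C \<rho> where C: "0 < C" "0 < \<rho>" "\<rho> < 1"
    "\<And>(\<nu>::'a\<Rightarrow>real) t. (\<Sum>z\<in>S. \<nu> z) = 0 \<Longrightarrow> (\<Sum>y\<in>S. \<bar>vm \<nu> t y\<bar>) \<le> C * \<rho> ^ t * (\<Sum>z\<in>S. \<bar>\<nu> z\<bar>)"
    using geo by blast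
  let ?X = "\<lambda>t. mpow A S t x0 y"
  have le: "\<bar>?X b - ?X a\<bar> \<le> 2 * C * \<rho> ^ a" if "a \<le> b" for a b
    using cauchy_step[OF C y, of "b - a" a] that by simp
  have "Cauchy ?X"
  proof (rule metric_CauchyI)
    fix e :: real assume e: "0 < e"
    have "(\<lambda>t. 2 * C * \<rho> ^ t) \<longlonglongrightarrow> 2 * C * 0"
      using C by (intro tendsto_mult_left LIMSEQ_power_zero) auto
    then have "eventually (\<lambda>t. 2 * C * \<rho> ^ t < e) sequentially"
      using e by (intro order_tendstoD(2)) auto
    then obtain M where M: "\<And>t. t \<ge> M \<Longrightarrow> 2 * C * \<rho> ^ t < e" by (auto simp: eventually_sequentially)
    show "\<exists>M. \<forall>a\<ge>M. \<forall>b\<ge>M. dist (?X a) (?X b) < e"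
    proof (intro exI allI impI)
      fix a b assume a: "a \<ge> M" and b: "b \<ge> M"
      show "dist (?X a) (?X b) < e"
      proof (cases "a \<le> b")
        case True
        then show ?thesis using le[OF True] M[OF a] by (simp add: dist_real_def abs_minus_commute)
      next
        case False
        then show ?thesis using le[of b a] M[OF b] by (simp add: dist_real_def)
      qed
    qed
  qed
  then have "convergent ?X" by (simp add: Cauchy_convergent_iff)
  then show ?thesis unfolding pi_def by (simp add: convergent_LIMSEQ_iff)
qed

lemma pi_stat: assumes y: "y \<in> S" shows "(\<Sum>x\<in>S. pi x * A x y) = pi y"
proof -
  have "(\<lambda>t. \<Sum>x\<in>S. mpow A S t x0 x * A x y) \<longlonglongrightarrow> (\<Sum>x\<in>S. pi x * A x y)"
    using pi_lim by (intro tendsto_sum tendsto_mult_right) auto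
  moreover have "(\<lambda>t. \<Sum>x\<in>S. mpow A S t x0 x * A x y) \<longlonglongrightarrow> pi y"
    using pi_lim[OF y] LIMSEQ_Suc[of "\<lambda>t. mpow A S t x0 y"] by simp
  ultimately show ?thesis by (rule LIMSEQ_unique)
qed

lemma pi_nonneg: assumes y: "y \<in> S" shows "0 \<le> pi y"
  using pi_lim[OF y] by (rule LIMSEQ_le_const) (use mpow_nonneg x0 y in auto)

lemma pi_sum: "(\<Sum>y\<in>S. pi y) = 1"
proof -
  have "(\<lambda>t. \<Sum>y\<in>S. mpow A S t x0 y) \<longlonglongrightarrow> (\<Sum>y\<in>S. pi y)"
    using pi_lim by (intro tendsto_sum) auto
  moreover have "(\<lambda>t. \<Sum>y\<in>S. mpow A S t x0 y) \<longlonglongrightarrow> 1" using mpow_rowsum[OF x0] by simp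
  ultimately show ?thesis by (rule LIMSEQ_unique)
qed

lemma vm_stat:
  assumes st: "\<And>y. y \<in> S \<Longrightarrow> (\<Sum>x\<in>S. \<mu> x * A x y) = \<mu> y" and y: "y \<in> S"
  shows "vm \<mu> t y = \<mu> y"
  using y
proof (induction t arbitrary: y)
  case 0 then show ?case by (simp add: vm_0)
next
  case (Suc t)
  have "vm \<mu> (Suc t) y = (\<Sum>k\<in>S. \<mu> k * A k y)" unfolding vm_Suc using Suc by (intro sum.cong) auto
  then show ?case using st[OF Suc.prems] by simp
qed

lemma conv_bound:
  assumes C: "0 < C" "0 < \<rho>" "\<rho> < 1"
    "\<And>(\<nu>::'a\<Rightarrow>real) t. (\<Sum>z\<in>S. \<nu> z) = 0 \<Longrightarrow> (\<Sum>y\<in>S. \<bar>vm \<nu> t y\<bar>) \<le> C * \<rho> ^ t * (\<Sum>z\<in>S. \<bar>\<nu> z\<bar>)"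
    and mu: "prob_dist \<mu> S"
  shows "(\<Sum>y\<in>S. \<bar>vm \<mu> t y - pi y\<bar>) \<le> C * \<rho> ^ t * (\<Sum>z\<in>S. \<bar>\<mu> z - pi z\<bar>)"
proof -
  have "(\<Sum>y\<in>S. \<bar>vm \<mu> t y - pi y\<bar>) = (\<Sum>y\<in>S. \<bar>vm (\<lambda>z. \<mu> z - pi z) t y\<bar>)"
    using vm_stat[OF pi_stat] by (intro sum.cong) (auto simp: vm_diff)
  also have "\<dots> \<le> C * \<rho> ^ t * (\<Sum>z\<in>S. \<bar>\<mu> z - pi z\<bar>)"
    using mu pi_sum by (intro C(4)) (simp add: sum_subtractf prob_dist_def)
  finally show ?thesis .
qed

lemma conv:
  assumes mu: "prob_dist \<mu> S" and y: "y \<in> S"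
  shows "(\<lambda>t. vm \<mu> t y) \<longlonglongrightarrow> pi y"
proof -
  obtain C \<rho> where C: "0 < C" "0 < \<rho>" "\<rho> < 1"
    "\<And>(\<nu>::'a\<Rightarrow>real) t. (\<Sum>z\<in>S. \<nu> z) = 0 \<Longrightarrow> (\<Sum>y\<in>S. \<bar>vm \<nu> t y\<bar>) \<le> C * \<rho> ^ t * (\<Sum>z\<in>S. \<bar>\<nu> z\<bar>)"
    using geo by blast
  define B where "B = C * (\<Sum>z\<in>S. \<bar>\<mu> z - pi z\<bar>)"
  have bd: "\<bar>vm \<mu> t y - pi y\<bar> \<le> B * \<rho> ^ t" for t
  proof -
    have "\<bar>vm \<mu> t y - pi y\<bar> \<le> (\<Sum>y\<in>S. \<bar>vm \<mu> t y - pi y\<bar>)" using y fin by (intro member_le_sum) auto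
    also have "\<dots> \<le> C * \<rho> ^ t * (\<Sum>z\<in>S. \<bar>\<mu> z - pi z\<bar>)" by (rule conv_bound[OF C mu])
    finally show ?thesis unfolding B_def by (simp add: mult_ac)
  qed
  have lim0: "(\<lambda>t. B * \<rho> ^ t) \<longlonglongrightarrow> 0"
    using C tendsto_mult_left[OF LIMSEQ_power_zero[of \<rho>], of B] by simp
  have "(\<lambda>t. vm \<mu> t y - pi y) \<longlonglongrightarrow> 0"
  proof (rule tendsto_sandwich[of "\<lambda>t. - (B * \<rho> ^ t)" _ _ "\<lambda>t. B * \<rho> ^ t"])
    show "\<forall>\<^sub>F n in sequentially. - (B * \<rho> ^ n) \<le> vm \<mu> n y - pi y"
      by (rule always_eventually) (metis bd abs_le_iff minus_diff_eq neg_le_iff_le)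
    show "\<forall>\<^sub>F n in sequentially. vm \<mu> n y - pi y \<le> B * \<rho> ^ n"
      by (rule always_eventually) (use bd in \<open>auto simp: abs_le_iff\<close>)
    show "(\<lambda>t. - (B * \<rho> ^ t)) \<longlonglongrightarrow> 0" using tendsto_minus[OF lim0] by simp
  qed (rule lim0)
  then show ?thesis by (rule LIM_zero_cancel)
qed

lemma unique:
  assumes st: "stationary A S \<mu>" and x: "x \<in> S"
  shows "\<mu> x = pi x"
proof -
  have "(\<lambda>t. vm \<mu> t x) \<longlonglongrightarrow> pi x" using st x conv unfolding stationary_def by auto
  moreover have "(\<lambda>t. vm \<mu> t x) = (\<lambda>t. \<mu> x)" using vm_stat st x unfolding stationary_def by auto
  ultimately show ?thesis using LIMSEQ_unique tendsto_const by metis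
qed

lemma tv_bound:
  obtains C \<rho> where "0 < C" "0 < \<rho>" "\<rho> < 1"
    "\<And>t x. x \<in> S \<Longrightarrow> (\<Sum>y\<in>S. \<bar>mpow A S t x y - pi y\<bar>) \<le> C * \<rho> ^ t"
proof -
  obtain C \<rho> where C: "0 < C" "0 < \<rho>" "\<rho> < 1"
    "\<And>(\<nu>::'a\<Rightarrow>real) t. (\<Sum>z\<in>S. \<nu> z) = 0 \<Longrightarrow> (\<Sum>y\<in>S. \<bar>vm \<nu> t y\<bar>) \<le> C * \<rho> ^ t * (\<Sum>z\<in>S. \<bar>\<nu> z\<bar>)"
    using geo by blast
  show ?thesis
  proof (rule that[of "2 * C" \<rho>])
    fix t x assume x: "x \<in> S"
    define dx where "dx = (\<lambda>z. if z = x then 1 else (0::real))"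
    have pd: "prob_dist dx S" unfolding prob_dist_def dx_def using fin x by simp
    have "(\<Sum>y\<in>S. \<bar>mpow A S t x y - pi y\<bar>) = (\<Sum>y\<in>S. \<bar>vm dx t y - pi y\<bar>)"
      unfolding dx_def using vm_delta[OF x] by simp
    also have "\<dots> \<le> C * \<rho> ^ t * (\<Sum>z\<in>S. \<bar>dx z - pi z\<bar>)" by (rule conv_bound[OF C pd])
    also have "(\<Sum>z\<in>S. \<bar>dx z - pi z\<bar>) \<le> (\<Sum>z\<in>S. dx z + pi z)"
    proof (intro sum_mono)
      fix z assume z: "z \<in> S"
      show "\<bar>dx z - pi z\<bar> \<le> dx z + pi z"
        using abs_triangle_ineq4[of "dx z" "pi z"] pi_nonneg[OF z] unfolding dx_def by simp
    qed
    also have "\<dots> = 2" using pd pi_sum unfolding prob_dist_def by (simp add: sum.distrib)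
    finally show "(\<Sum>y\<in>S. \<bar>mpow A S t x y - pi y\<bar>) \<le> 2 * C * \<rho> ^ t"
      using C by (simp add: mult_ac)
  qed (use C in auto)
qed

end



lemma summable_n_pow:
  fixes \<rho> :: real
  assumes "0 < \<rho>" "\<rho> < 1"
  shows "summable (\<lambda>n. real n * \<rho> ^ n)"
proof -
  define c where "c = (1 + \<rho>) / 2"
  have c: "c < 1" "\<rho> < c" "0 < c - \<rho>" using assms unfolding c_def by auto
  obtain N :: nat where N: "\<rho> / (c - \<rho>) < real N" using reals_Archimedean2 by blast
  show ?thesis
  proof (rule summable_ratio_test[of c N])
    show "c < 1" by (rule c(1))
    fix n assume n: "N \<le> n"
    have "\<rho> / (c - \<rho>) < real n" using N n by (meson le_less_trans not_le of_nat_le_iff order_less_le_trans)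
    then have "\<rho> < (c - \<rho>) * real n" using c by (simp add: divide_simps mult.commute)
    then have "(real n + 1) * \<rho> \<le> c * real n" by (simp add: algebra_simps)
    then have "(real n + 1) * \<rho> * \<rho> ^ n \<le> c * real n * \<rho> ^ n"
      using assms by (intro mult_right_mono) auto
    then show "norm (real (Suc n) * \<rho> ^ Suc n) \<le> c * norm (real n * \<rho> ^ n)"
      using assms by (simp add: abs_mult algebra_simps)
  qed
qed

context doeblin begin

definition mass :: "'a \<Rightarrow> nat \<Rightarrow> real" where "mass i t = (\<Sum>j\<in>S. taboo A S i t j)"

lemma taboo_nonneg: "j \<in> S \<Longrightarrow> 0 \<le> taboo A S i t j"
  by (induction t arbitrary: j) (auto intro!: sum_nonneg mult_nonneg_nonneg nonneg)

lemma fr_nonneg: "i \<in> S \<Longrightarrow> 0 \<le> first_return A S i t"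
  unfolding first_return_def by (auto intro!: sum_nonneg mult_nonneg_nonneg nonneg taboo_nonneg)

lemma mass_0: "i \<in> S \<Longrightarrow> mass i 0 = 1"
  unfolding mass_def using fin by (simp add: sum.delta')

lemma mass_nonneg: "0 \<le> mass i t"
  unfolding mass_def by (auto intro!: sum_nonneg taboo_nonneg)

lemma mass_step:
  assumes i: "i \<in> S"
  shows "mass i (Suc t) = mass i t - first_return A S i (Suc t)"
proof -
  define g where "g j = (\<Sum>k\<in>S. taboo A S i t k * A k j)" for j
  have "mass i (Suc t) = (\<Sum>j\<in>S. if j = i then 0 else g j)" unfolding mass_def g_def by simp
  moreover have "(\<Sum>j\<in>S. g j) = (\<Sum>j\<in>S. (if j = i then 0 else g j) + (if j = i then g j else 0))"
    by (rule sum.cong) auto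
  moreover have "(\<Sum>j\<in>S. if j = i then g j else 0) = g i" using fin i by (simp add: sum.delta')
  moreover have "(\<Sum>j\<in>S. g j) = mass i t"
  proof -
    have "(\<Sum>j\<in>S. g j) = (\<Sum>j\<in>S. \<Sum>k\<in>S. taboo A S i t k * A k j)" unfolding g_def ..
    also have "\<dots> = (\<Sum>k\<in>S. \<Sum>j\<in>S. taboo A S i t k * A k j)" by (rule sum.swap)
    also have "\<dots> = (\<Sum>k\<in>S. taboo A S i t k * (\<Sum>j\<in>S. A k j))" by (simp add: sum_distrib_left)
    also have "\<dots> = mass i t" unfolding mass_def using rowsum by simp
    finally show ?thesis .
  qed
  moreover have "first_return A S i (Suc t) = g i" unfolding first_return_def g_def by simp
  ultimately show ?thesis by (simp add: sum.distrib)
qed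

lemma mass_le1: "i \<in> S \<Longrightarrow> mass i t \<le> 1"
proof (induction t)
  case 0 then show ?case by (simp add: mass_0)
next
  case (Suc t) then show ?case using mass_step[OF Suc.prems, of t] fr_nonneg[of i "Suc t"] Suc.prems by simp
qed

lemma dominate: "j \<in> S \<Longrightarrow> taboo A S i (t + s) j \<le> vm (taboo A S i t) s j"
proof (induction s arbitrary: j)
  case 0 then show ?case by (simp add: vm_0)
next
  case (Suc s)
  have vn: "0 \<le> vm (taboo A S i t) (Suc s) j"
    by (rule vm_nonneg[OF taboo_nonneg Suc.prems])
  show ?case
  proof (cases "j = i")
    case True then show ?thesis using vn by simp
  next
    case False
    have "taboo A S i (t + Suc s) j = (\<Sum>k\<in>S. taboo A S i (t + s) k * A k j)" using False by simp
    also have "\<dots> \<le> (\<Sum>k\<in>S. vm (taboo A S i t) s k * A k j)"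
      using Suc.IH Suc.prems nonneg by (intro sum_mono mult_right_mono) auto
    also have "\<dots> = vm (taboo A S i t) (Suc s) j" by (simp add: vm_Suc)
    finally show ?thesis .
  qed
qed

lemma d_le1: "\<delta> \<le> 1"
proof -
  have "real (card S) * \<delta> \<le> 1" using r_bounds unfolding r_def by simp
  moreover have "1 \<le> real (card S)" using fin ne by (simp add: Suc_leI card_gt_0_iff)
  ultimately show ?thesis using d_pos by (smt (verit) mult_le_cancel_right1)
qed

lemma mass_decay:
  assumes i: "i \<in> S"
  shows "mass i (t + m) \<le> (1 - \<delta>) * mass i t"
proof -
  let ?v = "vm (taboo A S i t) m"
  obtain m' where m': "m = Suc m'" using m_pos by (cases m) auto
  have "mass i (t + m) \<le> (\<Sum>j\<in>S. if j = i then 0 else ?v j)"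
    unfolding mass_def
  proof (rule sum_mono)
    fix j assume j: "j \<in> S"
    show "taboo A S i (t + m) j \<le> (if j = i then 0 else ?v j)"
    proof (cases "j = i")
      case True then show ?thesis using m' by simp
    next
      case False then show ?thesis using dominate[OF j] by simp
    qed
  qed
  also have "(\<Sum>j\<in>S. if j = i then 0 else ?v j) = (\<Sum>j\<in>S. ?v j) - ?v i"
  proof -
    have "(\<Sum>j\<in>S. ?v j) = (\<Sum>j\<in>S. (if j = i then 0 else ?v j) + (if j = i then ?v j else 0))"
      by (rule sum.cong) auto
    also have "\<dots> = (\<Sum>j\<in>S. if j = i then 0 else ?v j) + ?v i"
      using fin i by (simp add: sum.distrib sum.delta')
    finally show ?thesis by simp
  qed
  also have "(\<Sum>j\<in>S. ?v j) = mass i t" unfolding mass_def by (rule vm_sum)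
  also have "?v i \<ge> \<delta> * mass i t"
  proof -
    have "\<delta> * mass i t = (\<Sum>z\<in>S. taboo A S i t z * \<delta>)" unfolding mass_def
      by (simp add: sum_distrib_left mult.commute)
    also have "\<dots> \<le> (\<Sum>z\<in>S. taboo A S i t z * mpow A S m z i)"
      using minor i taboo_nonneg by (intro sum_mono mult_left_mono) auto
    also have "\<dots> = ?v i" unfolding vm_def ..
    finally show ?thesis .
  qed
  then have "mass i t - ?v i \<le> (1 - \<delta>) * mass i t" by (simp add: algebra_simps)
  finally show ?thesis by simp
qed

lemma mass_q: "i \<in> S \<Longrightarrow> mass i (q * m + s) \<le> (1 - \<delta>) ^ q"
proof (induction q)
  case 0 then show ?case using mass_le1 by simp
next
  case (Suc q)
  have "mass i (Suc q * m + s) = mass i ((q * m + s) + m)" by (simp add: algebra_simps)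
  also have "\<dots> \<le> (1 - \<delta>) * mass i (q * m + s)" by (rule mass_decay[OF Suc.prems])
  also have "\<dots> \<le> (1 - \<delta>) * (1 - \<delta>) ^ q" using Suc d_le1 by (intro mult_left_mono) auto
  finally show ?case by simp
qed

lemma pos_rec: assumes i: "i \<in> S" shows "positive_recurrent A S i"
proof -
  obtain C \<rho> where C: "0 < C" "0 < \<rho>" "\<rho> < 1" "\<And>t. (1 - \<delta>) ^ (t div m) \<le> C * \<rho> ^ t"
    using geom_bound[of "1 - \<delta>" m] d_le1 d_pos m_pos by auto
  have mb: "mass i t \<le> C * \<rho> ^ t" for t
    using mass_q[OF i, of "t div m" "t mod m"] C(4)[of t] by simp
  have m0: "(\<lambda>t. mass i t) \<longlonglongrightarrow> 0"
  proof (rule tendsto_sandwich[of "\<lambda>_. 0" _ _ "\<lambda>t. C * \<rho> ^ t"])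
    show "(\<lambda>t. C * \<rho> ^ t) \<longlonglongrightarrow> 0" using C tendsto_mult_left[OF LIMSEQ_power_zero[of \<rho>], of C] by simp
  qed (auto intro: always_eventually mass_nonneg mb)
  have part: "(\<Sum>u<Suc n. first_return A S i u) = 1 - mass i n" for n
  proof (induction n)
    case 0 then show ?case by (simp add: first_return_def mass_0[OF i])
  next
    case (Suc n) then show ?case using mass_step[OF i, of n] by simp
  qed
  have "first_return A S i sums 1"
    unfolding sums_def
  proof (subst filterlim_sequentially_Suc[symmetric])
    show "(\<lambda>n. \<Sum>u<Suc n. first_return A S i u) \<longlonglongrightarrow> 1"
      unfolding part using tendsto_diff[OF tendsto_const[of 1] m0] by simp
  qed
  moreover have "summable (\<lambda>t. real t * first_return A S i t)"
  proof (rule summable_comparison_test)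
    show "summable (\<lambda>n. C / \<rho> * (real n * \<rho> ^ n))"
      by (rule summable_mult[OF summable_n_pow[OF C(2,3)]])
    show "\<exists>N. \<forall>n\<ge>N. norm (real n * first_return A S i n) \<le> C / \<rho> * (real n * \<rho> ^ n)"
    proof (intro exI allI impI)
      fix n :: nat
      show "norm (real n * first_return A S i n) \<le> C / \<rho> * (real n * \<rho> ^ n)"
      proof (cases n)
        case 0 then show ?thesis by (simp add: first_return_def)
      next
        case (Suc k)
        have "first_return A S i n \<le> mass i k" using mass_step[OF i, of k] mass_nonneg[of i "Suc k"] Suc by simp
        also have "\<dots> \<le> C * \<rho> ^ k" by (rule mb)
        also have "\<dots> = C / \<rho> * \<rho> ^ n" using Suc C by simp
        finally have "first_return A S i n \<le> C / \<rho> * \<rho> ^ n" .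
        then have "real n * first_return A S i n \<le> real n * (C / \<rho> * \<rho> ^ n)"
          by (intro mult_left_mono) auto
        then show ?thesis using fr_nonneg[of i n] i by (simp add: abs_mult mult_ac)
      qed
    qed
  qed
  ultimately show ?thesis unfolding positive_recurrent_def by simp
qed

end



lemma nbhd_image: "nbhd N nv n = (\<lambda>j. nat ((int n + j - 1) mod int N + 1)) ` {- int nv..int nv}"
  unfolding nbhd_def by auto

lemma nbhd_finite: "finite (nbhd N nv n)"
  unfolding nbhd_image by simp

lemma nbhd_sub: "N \<ge> 1 \<Longrightarrow> nbhd N nv n \<subseteq> {1..N}"
proof
  fix i assume N: "N \<ge> 1" and i: "i \<in> nbhd N nv n"
  then obtain j where ij: "i = nat ((int n + j - 1) mod int N + 1)" unfolding nbhd_def by auto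
  have "0 \<le> (int n + j - 1) mod int N" "(int n + j - 1) mod int N < int N" using N by auto
  then show "i \<in> {1..N}" using ij by auto
qed

lemma nbhd_self: "n \<in> {1..N} \<Longrightarrow> n \<in> nbhd N nv n"
proof -
  assume n: "n \<in> {1..N}"
  have "(int n - 1) mod int N = int n - 1" using n by (intro mod_pos_pos_trivial) auto
  then have "n = nat ((int n + 0 - 1) mod int N + 1)" using n by simp
  then show ?thesis unfolding nbhd_def by force
qed

lemma nbhd_card: "n \<in> {1..N} \<Longrightarrow> card (nbhd N nv n) > 0"
proof -
  assume n: "n \<in> {1..N}"
  have "nbhd N nv n \<noteq> {}" using nbhd_self[OF n] by blast
  then show ?thesis using nbhd_finite[of N nv n] by (simp add: card_gt_0_iff)
qed

locale pca =
  fixes N K nv :: nat and T :: "nat \<Rightarrow> nat \<Rightarrow> real"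
  assumes N1: "N \<ge> 1" and K1: "K \<ge> 1"
    and rs: "row_stochastic T {1..K}"
    and irr: "irreducible_mat T {1..K}"
    and ap: "aperiodic_mat T {1..K}"
begin

abbreviation "S \<equiv> states N K"
abbreviation "P \<equiv> pca_P N nv T"

lemma T_nonneg: "i \<in> {1..K} \<Longrightarrow> j \<in> {1..K} \<Longrightarrow> 0 \<le> T i j"
  using rs unfolding row_stochastic_def by auto

lemma T_rowsum: "i \<in> {1..K} \<Longrightarrow> (\<Sum>j\<in>{1..K}. T i j) = 1"
  using rs unfolding row_stochastic_def by auto

lemma T_stoch: "stoch T {1..K}"
  by unfold_locales (use K1 T_nonneg T_rowsum in auto)

lemma S_finite: "finite S" unfolding states_def by (simp add: finite_PiE)

lemma S_ne: "S \<noteq> {}" unfolding states_def using K1 by (simp add: PiE_eq_empty_iff)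

lemma S_mem: "x \<in> S \<Longrightarrow> n \<in> {1..N} \<Longrightarrow> x n \<in> {1..K}"
  unfolding states_def by auto

lemma S_mem_nb: "x \<in> S \<Longrightarrow> n \<in> {1..N} \<Longrightarrow> i \<in> nbhd N nv n \<Longrightarrow> x i \<in> {1..K}"
  using nbhd_sub[OF N1] S_mem by blast

lemma P_nonneg: "x \<in> S \<Longrightarrow> y \<in> S \<Longrightarrow> 0 \<le> P x y"
proof -
  assume x: "x \<in> S" and y: "y \<in> S"
  have key: "\<And>n i. n \<in> {1..N} \<Longrightarrow> i \<in> nbhd N nv n \<Longrightarrow> 0 \<le> T (x i) (y n)"
    by (rule T_nonneg[OF S_mem_nb[OF x] S_mem[OF y]])
  show ?thesis unfolding pca_P_def by (intro prod_nonneg mult_nonneg_nonneg sum_nonneg) (auto intro: key)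
qed

lemma P_rowsum: "x \<in> S \<Longrightarrow> (\<Sum>y\<in>S. P x y) = 1"
proof -
  assume x: "x \<in> S"
  let ?f = "\<lambda>n k. 1 / real (card (nbhd N nv n)) * (\<Sum>i\<in>nbhd N nv n. T (x i) k)"
  have "(\<Sum>y\<in>S. P x y) = (\<Sum>y\<in>PiE {1..N} (\<lambda>_. {1..K}). \<Prod>n\<in>{1..N}. ?f n (y n))"
    unfolding pca_P_def states_def ..
  also have "\<dots> = (\<Prod>n\<in>{1..N}. \<Sum>k\<in>{1..K}. ?f n k)"
    by (rule prod_sum_PiE[symmetric]) auto
  also have "\<dots> = (\<Prod>n\<in>{1..N}. (1::real))"
  proof (rule prod.cong[OF refl])
    fix n assume n: "n \<in> {1..N}"
    have "(\<Sum>k\<in>{1..K}. ?f n k) = 1 / real (card (nbhd N nv n)) * (\<Sum>k\<in>{1..K}. \<Sum>i\<in>nbhd N nv n. T (x i) k)"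
      by (simp only: sum_distrib_left)
    also have "(\<Sum>k\<in>{1..K}. \<Sum>i\<in>nbhd N nv n. T (x i) k) = (\<Sum>i\<in>nbhd N nv n. \<Sum>k\<in>{1..K}. T (x i) k)"
      by (rule sum.swap)
    also have "(\<Sum>i\<in>nbhd N nv n. \<Sum>k\<in>{1..K}. T (x i) k) = (\<Sum>i\<in>nbhd N nv n. (1::real))"
      using n by (intro sum.cong[OF refl] T_rowsum S_mem_nb[OF x])
    finally show "(\<Sum>k\<in>{1..K}. ?f n k) = 1" using nbhd_card[OF n] by simp
  qed
  finally show ?thesis by simp
qed

lemma P_stoch: "stoch P S"
  by unfold_locales (use S_finite S_ne P_nonneg P_rowsum in auto)

definition c :: real where "c = (\<Prod>n\<in>{1..N}. 1 / real (card (nbhd N nv n)))"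

lemma c_pos: "c > 0" unfolding c_def using nbhd_card by (intro prod_pos) auto

lemma P_lower: "z \<in> S \<Longrightarrow> y \<in> S \<Longrightarrow> c * (\<Prod>n\<in>{1..N}. T (z n) (y n)) \<le> P z y"
proof -
  assume z: "z \<in> S" and y: "y \<in> S"
  have "c * (\<Prod>n\<in>{1..N}. T (z n) (y n)) = (\<Prod>n\<in>{1..N}. 1 / real (card (nbhd N nv n)) * T (z n) (y n))"
    unfolding c_def by (simp only: prod.distrib)
  also have "\<dots> \<le> P z y" unfolding pca_P_def
  proof (rule prod_mono)
    fix n assume n: "n \<in> {1..N}"
    have t0: "0 \<le> T (z n) (y n)" using z y n by (intro T_nonneg S_mem) auto
    have key: "\<And>i. i \<in> nbhd N nv n \<Longrightarrow> 0 \<le> T (z i) (y n)"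
      by (rule T_nonneg[OF S_mem_nb[OF z n] S_mem[OF y n]])
    have "T (z n) (y n) \<le> (\<Sum>i\<in>nbhd N nv n. T (z i) (y n))"
      using key nbhd_finite by (intro member_le_sum[OF nbhd_self[OF n]]) auto
    show "0 \<le> 1 / real (card (nbhd N nv n)) * T (z n) (y n) \<and>
      1 / real (card (nbhd N nv n)) * T (z n) (y n) \<le> 1 / real (card (nbhd N nv n)) * (\<Sum>i\<in>nbhd N nv n. T (z i) (y n))"
    proof (intro conjI)
      show "0 \<le> 1 / real (card (nbhd N nv n)) * T (z n) (y n)" using t0 by simp
      show "1 / real (card (nbhd N nv n)) * T (z n) (y n) \<le> 1 / real (card (nbhd N nv n)) * (\<Sum>i\<in>nbhd N nv n. T (z i) (y n))"
        by (rule mult_left_mono[OF \<open>T (z n) (y n) \<le> _\<close>]) simp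
    qed
  qed
  finally show ?thesis .
qed

lemma P_pow_lower:
  "x \<in> S \<Longrightarrow> y \<in> S \<Longrightarrow> c ^ t * (\<Prod>n\<in>{1..N}. mpow T {1..K} t (x n) (y n)) \<le> mpow P S t x y"
proof (induction t arbitrary: y)
  case 0
  show ?case
  proof (cases "x = y")
    case True then show ?thesis by simp
  next
    case False
    then obtain n where n: "x n \<noteq> y n" by auto
    have "n \<in> {1..N}"
    proof (rule ccontr)
      assume "n \<notin> {1..N}"
      then have "x n = undefined" "y n = undefined" using 0 unfolding states_def by (auto simp: PiE_def extensional_def)
      then show False using n by simp
    qed
    then have prod0: "(\<Prod>n\<in>{1..N}. mpow T {1..K} 0 (x n) (y n)) = 0" using n
      by (intro prod_zero) auto
    have e1: "mpow P S 0 x y = 0" using False by simp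
    show ?thesis unfolding e1 prod0 by simp
  qed
next
  case (Suc t)
  interpret Ts: stoch T "{1..K}" by (rule T_stoch)
  have "c ^ Suc t * (\<Prod>n\<in>{1..N}. mpow T {1..K} (Suc t) (x n) (y n))
      = c ^ Suc t * (\<Prod>n\<in>{1..N}. \<Sum>k\<in>{1..K}. mpow T {1..K} t (x n) k * T k (y n))" by simp
  also have "\<dots> = c ^ Suc t * (\<Sum>z\<in>S. \<Prod>n\<in>{1..N}. mpow T {1..K} t (x n) (z n) * T (z n) (y n))"
    unfolding states_def by (subst prod_sum_PiE) auto
  also have "\<dots> = (\<Sum>z\<in>S. (c ^ t * (\<Prod>n\<in>{1..N}. mpow T {1..K} t (x n) (z n))) * (c * (\<Prod>n\<in>{1..N}. T (z n) (y n))))"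
    by (simp add: sum_distrib_left prod.distrib mult_ac)
  also have "\<dots> \<le> (\<Sum>z\<in>S. mpow P S t x z * P z y)"
  proof (rule sum_mono)
    fix z assume z: "z \<in> S"
    have a: "0 \<le> c ^ t * (\<Prod>n\<in>{1..N}. mpow T {1..K} t (x n) (z n))"
      using c_pos Suc.prems z by (intro mult_nonneg_nonneg prod_nonneg Ts.mpow_nonneg S_mem) auto
    have b: "0 \<le> c * (\<Prod>n\<in>{1..N}. T (z n) (y n))"
      using c_pos Suc.prems z by (intro mult_nonneg_nonneg prod_nonneg T_nonneg S_mem) auto
    show "(c ^ t * (\<Prod>n\<in>{1..N}. mpow T {1..K} t (x n) (z n))) * (c * (\<Prod>n\<in>{1..N}. T (z n) (y n))) \<le> mpow P S t x z * P z y"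
      using Suc.IH[OF Suc.prems(1) z] P_lower[OF z Suc.prems(2)] a b by (intro mult_mono) auto
  qed
  also have "\<dots> = mpow P S (Suc t) x y" by simp
  finally show ?case .
qed

lemma T_primitive: "\<exists>m0. \<forall>i\<in>{1..K}. \<forall>j\<in>{1..K}. \<forall>t\<ge>m0. mpow T {1..K} t i j > 0"
proof -
  interpret Ts: stoch T "{1..K}" by (rule T_stoch)
  have split: "mpow T {1..K} a i k * mpow T {1..K} b k j \<le> mpow T {1..K} (a + b) i j"
    if "i \<in> {1..K}" "j \<in> {1..K}" "k \<in> {1..K}" for a b i j k
  proof -
    have nn: "\<And>l. l \<in> {1..K} \<Longrightarrow> 0 \<le> mpow T {1..K} a i l * mpow T {1..K} b l j"
      using that by (intro mult_nonneg_nonneg Ts.mpow_nonneg) auto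
    have "mpow T {1..K} a i k * mpow T {1..K} b k j \<le> (\<Sum>l\<in>{1..K}. mpow T {1..K} a i l * mpow T {1..K} b l j)"
      using nn that(3) by (intro member_le_sum) auto
    also have "\<dots> = mpow T {1..K} (a + b) i j" using mpow_add[of j "{1..K}" T a b i] that by simp
    finally show ?thesis .
  qed
  have ret: "\<exists>n0. \<forall>t\<ge>n0. mpow T {1..K} t i i > 0" if i: "i \<in> {1..K}" for i
  proof -
    define R where "R = {t. t > 0 \<and> mpow T {1..K} t i i > 0}"
    have cl: "a + b \<in> R" if a: "a \<in> R" and b: "b \<in> R" for a b
    proof -
      have pa: "a > 0" "mpow T {1..K} a i i > 0" using a unfolding R_def by auto
      have pb: "mpow T {1..K} b i i > 0" using b unfolding R_def by auto
      have "0 < mpow T {1..K} a i i * mpow T {1..K} b i i" using pa pb by simp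
      also have "\<dots> \<le> mpow T {1..K} (a + b) i i" by (rule split[OF i i i])
      finally show ?thesis unfolding R_def using pa by simp
    qed
    have pos: "\<And>a. a \<in> R \<Longrightarrow> a > 0" unfolding R_def by simp
    have g: "Gcd R = 1" using ap i unfolding aperiodic_mat_def period_def R_def by simp
    obtain n0 where "\<forall>n\<ge>n0. n \<in> R" using numerical_semigroup[of R, OF cl pos g] by blast
    then show ?thesis unfolding R_def by blast
  qed
  have pair: "\<exists>n0. \<forall>t\<ge>n0. mpow T {1..K} t i j > 0" if ij: "i \<in> {1..K}" "j \<in> {1..K}" for i j
  proof -
    obtain s where s: "mpow T {1..K} s i j > 0" using irr ij unfolding irreducible_mat_def by blast
    obtain n0 where n0: "\<forall>t\<ge>n0. mpow T {1..K} t i i > 0" using ret[OF ij(1)] by blast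
    have "mpow T {1..K} t i j > 0" if t: "t \<ge> n0 + s" for t
    proof -
      have "0 < mpow T {1..K} (t - s) i i" using n0 t by simp
      then have "0 < mpow T {1..K} (t - s) i i * mpow T {1..K} s i j" using s by simp
      also have "\<dots> \<le> mpow T {1..K} (t - s + s) i j" by (rule split[OF ij(1) ij(2) ij(1)])
      also have "t - s + s = t" using t by simp
      finally show ?thesis .
    qed
    then show ?thesis by blast
  qed
  have "\<forall>p\<in>{1..K} \<times> {1..K}. \<exists>n0. \<forall>t\<ge>n0. mpow T {1..K} t (fst p) (snd p) > 0"
    using pair by auto
  from finite_uniform_bound[OF _ this] obtain m0 where
    m0: "\<forall>p\<in>{1..K} \<times> {1..K}. \<forall>t\<ge>m0. mpow T {1..K} t (fst p) (snd p) > 0" by blast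
  show ?thesis
  proof (intro exI ballI allI impI)
    fix i j t assume "i \<in> {1..K}" "j \<in> {1..K}" "m0 \<le> t"
    then show "mpow T {1..K} t i j > 0" using m0 by fastforce
  qed
qed

lemma P_primitive: "\<exists>m0>0. \<forall>x\<in>S. \<forall>y\<in>S. \<forall>t\<ge>m0. mpow P S t x y > 0"
proof -
  obtain m0 where m0: "\<forall>i\<in>{1..K}. \<forall>j\<in>{1..K}. \<forall>t\<ge>m0. mpow T {1..K} t i j > 0"
    using T_primitive by auto
  have "mpow P S t x y > 0" if "x \<in> S" "y \<in> S" "t \<ge> m0" for x y t
  proof -
    have pp: "0 < mpow T {1..K} t (x n) (y n)" if n: "n \<in> {1..N}" for n
      using m0 S_mem[OF \<open>x \<in> S\<close> n] S_mem[OF \<open>y \<in> S\<close> n] \<open>t \<ge> m0\<close> by blast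
    have "0 < c ^ t * (\<Prod>n\<in>{1..N}. mpow T {1..K} t (x n) (y n))"
      using c_pos pp by (intro mult_pos_pos zero_less_power prod_pos) auto
    also have "\<dots> \<le> mpow P S t x y" by (rule P_pow_lower) (use that in auto)
    finally show ?thesis .
  qed
  then show ?thesis by (intro exI[of _ "max m0 1"]) auto
qed

end



context pca begin

lemma main:
  "irreducible_mat P S
    \<and> aperiodic_mat P S
    \<and> (\<exists>\<pi>. stationary P S \<pi>
          \<and> (\<forall>\<pi>'. stationary P S \<pi>' \<longrightarrow> (\<forall>x\<in>S. \<pi>' x = \<pi> x))
          \<and> (\<forall>x\<in>S. positive_recurrent P S x)
          \<and> (\<forall>\<mu>. prob_dist \<mu> S \<longrightarrow>
               (\<forall>y\<in>S. (\<lambda>t. \<Sum>x\<in>S. \<mu> x * mpow P S t x y) \<longlonglongrightarrow> \<pi> y))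
          \<and> (\<exists>C \<rho> t0. 0 < C \<and> 0 < \<rho> \<and> \<rho> < 1 \<and>
               (\<forall>t\<ge>t0. \<forall>x\<in>S. (\<Sum>y\<in>S. \<bar>mpow P S t x y - \<pi> y\<bar>) \<le> C * \<rho> ^ t)))"
proof -
  interpret Ps: stoch P S by (rule P_stoch)
  obtain m0 where m0: "m0 > 0" "\<forall>x\<in>S. \<forall>y\<in>S. \<forall>t\<ge>m0. mpow P S t x y > 0"
    using P_primitive by blast
  define M where "M = (\<lambda>(x, y). mpow P S m0 x y) ` (S \<times> S)"
  have Mfin: "finite M" unfolding M_def using S_finite by simp
  have Mne: "M \<noteq> {}" unfolding M_def using S_ne by simp
  define \<delta> where "\<delta> = Min M"
  have dpos: "\<delta> > 0" unfolding \<delta>_def using Mfin Mne m0 unfolding M_def by (auto simp: Min_gr_iff)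
  have dle: "\<delta> \<le> mpow P S m0 x y" if "x \<in> S" "y \<in> S" for x y
    unfolding \<delta>_def using Mfin that unfolding M_def by (intro Min_le) auto
  interpret D: doeblin P S m0 \<delta>
    by unfold_locales (use m0 dpos dle in auto)
  have irr: "irreducible_mat P S" unfolding irreducible_mat_def using m0 by blast
  have ap: "aperiodic_mat P S" unfolding aperiodic_mat_def period_def
  proof
    fix x assume x: "x \<in> S"
    define G where "G = {t. 0 < t \<and> 0 < mpow P S t x x}"
    have g1: "m0 \<in> G" unfolding G_def using m0 x by auto
    have "0 < mpow P S (m0 + 1) x x" using m0(2) x le_add1 by blast
    then have g2: "m0 + 1 \<in> G" unfolding G_def by simp
    have "Gcd G dvd m0" "Gcd G dvd m0 + 1" using g1 g2 by (auto intro: Gcd_dvd)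
    then have "Gcd G dvd 1" using dvd_add_right_iff by blast
    then show "Gcd {t. 0 < t \<and> 0 < mpow P S t x x} = 1" unfolding G_def by simp
  qed
  obtain C \<rho> where C: "0 < C" "0 < \<rho>" "\<rho> < 1"
    "\<And>t x. x \<in> S \<Longrightarrow> (\<Sum>y\<in>S. \<bar>mpow P S t x y - D.pi y\<bar>) \<le> C * \<rho> ^ t"
    using D.tv_bound by blast
  have st: "stationary P S D.pi"
    unfolding stationary_def prob_dist_def using D.pi_nonneg D.pi_sum D.pi_stat by auto
  have un: "\<forall>\<pi>'. stationary P S \<pi>' \<longrightarrow> (\<forall>x\<in>S. \<pi>' x = D.pi x)" using D.unique by blast
  have pr: "\<forall>x\<in>S. positive_recurrent P S x" using D.pos_rec by blast
  have cv: "\<forall>\<mu>. prob_dist \<mu> S \<longrightarrow> (\<forall>y\<in>S. (\<lambda>t. \<Sum>x\<in>S. \<mu> x * mpow P S t x y) \<longlonglongrightarrow> D.pi y)"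
    using D.conv unfolding Ps.vm_def by blast
  have tv: "\<exists>C \<rho> t0. 0 < C \<and> 0 < \<rho> \<and> \<rho> < 1 \<and>
               (\<forall>t\<ge>t0. \<forall>x\<in>S. (\<Sum>y\<in>S. \<bar>mpow P S t x y - D.pi y\<bar>) \<le> C * \<rho> ^ t)"
    using C by blast
  show ?thesis using irr ap st un pr cv tv by blast
qed

end

theorem theorem2p10:
  fixes N K nv :: nat and T :: "nat \<Rightarrow> nat \<Rightarrow> real"
  assumes "N \<ge> 1" and "K \<ge> 1"
    and "row_stochastic T {1..K}"
    and "irreducible_mat T {1..K}"
    and "aperiodic_mat T {1..K}"
  shows "irreducible_mat (pca_P N nv T) (states N K)
    \<and> aperiodic_mat (pca_P N nv T) (states N K)
    \<and> (\<exists>\<pi>. stationary (pca_P N nv T) (states N K) \<pi>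
          \<and> (\<forall>\<pi>'. stationary (pca_P N nv T) (states N K) \<pi>' \<longrightarrow> (\<forall>x\<in>states N K. \<pi>' x = \<pi> x))
          \<and> (\<forall>x\<in>states N K. positive_recurrent (pca_P N nv T) (states N K) x)
          \<and> (\<forall>\<mu>. prob_dist \<mu> (states N K) \<longrightarrow>
               (\<forall>y\<in>states N K. (\<lambda>t. \<Sum>x\<in>states N K. \<mu> x * mpow (pca_P N nv T) (states N K) t x y)
                    \<longlonglongrightarrow> \<pi> y))
          \<and> (\<exists>C \<rho> t0. 0 < C \<and> 0 < \<rho> \<and> \<rho> < 1 \<and>
               (\<forall>t\<ge>t0. \<forall>x\<in>states N K.
                  (\<Sum>y\<in>states N K. \<bar>mpow (pca_P N nv T) (states N K) t x y - \<pi> y\<bar>) \<le> C * \<rho> ^ t)))"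
proof -
  interpret pca N K nv T using assms by unfold_locales
  show ?thesis by (rule main)
qed


end
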